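(* Let $\Theta$ be a set and $(f_\theta)_{\theta\in\Theta}$ a family of stable mappings $(0,\infty)\to(0,\infty)$ such that $\sup_\theta f_\theta$ and $\inf_\theta f_\theta$ take values in $(0,\infty)$. Then $\sup_{\theta\in\Theta}f_\theta$ and $\inf_{\theta\in\Theta}f_\theta$ are both stable.
   Context: A function $f:(0,\infty)\to(0,\infty)$ is stable if $|f(x)-f(y)|\le\sqrt{\frac{f(x)f(y)}{xy}}|x-y|$ for all $x,y>0$. *)

theory Defs
  imports "HOL-Analysis.Analysis"
begin

text \<open>A function f : (0,\<infinity>) \<rightarrow> (0,\<infinity>) is stable if
  |f x - f y| \<le> sqrt (f x * f y / (x * y)) * |x - y| for all x, y > 0.
  Functions are represented as real \<Rightarrow> real; only their values on (0,\<infinity>) matter.\<close>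
definition stable :: "(real \<Rightarrow> real) \<Rightarrow> bool" where
  "stable f \<longleftrightarrow> (\<forall>x>0. f x > 0) \<and>
     (\<forall>x>0. \<forall>y>0. \<bar>f x - f y\<bar> \<le> sqrt (f x * f y / (x * y)) * \<bar>x - y\<bar>)"

end

theory Submission
  imports Defs
begin

lemma key_sq:
  fixes a b x y :: real
  assumes "a > 0" "b > 0" "x > 0" "y > 0"
  shows "\<bar>a - b\<bar> \<le> sqrt (a * b / (x * y)) * \<bar>x - y\<bar> \<longleftrightarrow> (a*x - b*y) * (a*y - b*x) \<le> 0"
proof -
  have "sqrt (a * b / (x * y)) * \<bar>x - y\<bar> = sqrt (a * b / (x * y) * (x - y)^2)"
    by (simp only: real_sqrt_mult real_sqrt_abs)
  hence "\<bar>a - b\<bar> \<le> sqrt (a * b / (x * y)) * \<bar>x - y\<bar> \<longleftrightarrow> (a - b)^2 \<le> a * b / (x * y) * (x - y)^2"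
    using assms by (metis abs_ge_zero real_le_rsqrt real_sqrt_abs real_sqrt_le_mono power2_abs
        divide_nonneg_pos mult_nonneg_nonneg order_less_imp_le zero_le_power2 real_sqrt_le_iff)
  also have "\<dots> \<longleftrightarrow> x * y * (a - b)^2 \<le> a * b * (x - y)^2"
    using assms by (simp add: field_simps)
  also have "\<dots> \<longleftrightarrow> (a*x - b*y) * (a*y - b*x) \<le> 0"
    by (simp add: power2_eq_square algebra_simps)
  finally show ?thesis .
qed

lemma key:
  fixes a b x y :: real
  assumes "a > 0" "b > 0" "x > 0" "y > 0"
  shows "\<bar>a - b\<bar> \<le> sqrt (a * b / (x * y)) * \<bar>x - y\<bar> \<longleftrightarrow>
     (a * min x y \<le> b * max x y \<and> b * min x y \<le> a * max x y)"
proof -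
  have "(a*x - b*y) * (a*y - b*x) \<le> 0 \<longleftrightarrow> (a * min x y \<le> b * max x y \<and> b * min x y \<le> a * max x y)"
  proof (cases "x \<le> y")
    case True
    then show ?thesis using assms
      by (cases "a \<le> b") (auto simp: mult_le_0_iff min_def max_def intro: mult_mono mult_mono',
          (smt (verit) mult_left_mono mult_right_mono)+)
  next
    case False
    then show ?thesis using assms
      by (cases "a \<le> b") (auto simp: mult_le_0_iff min_def max_def,
          (smt (verit) mult_left_mono mult_right_mono)+)
  qed
  thus ?thesis using key_sq[OF assms] by simp
qed

lemma stable_iff:
  "stable f \<longleftrightarrow> (\<forall>x>0. f x > 0) \<and> (\<forall>x>0. \<forall>y>0. f x * min x y \<le> f y * max x y)"
  unfolding stable_def
proof (intro iffI conjI allI impI; (elim conjE)?)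
  fix x y :: real
  assume p: "\<forall>x>0. 0 < f x" and h: "\<forall>x>0. \<forall>y>0. \<bar>f x - f y\<bar> \<le> sqrt (f x * f y / (x * y)) * \<bar>x - y\<bar>"
    and "x > 0" "y > 0"
  then show "f x * min x y \<le> f y * max x y" using key[of "f x" "f y" x y] by auto
next
  fix x y :: real
  assume p: "\<forall>x>0. 0 < f x" and h: "\<forall>x>0. \<forall>y>0. f x * min x y \<le> f y * max x y"
    and "x > 0" "y > 0"
  then show "\<bar>f x - f y\<bar> \<le> sqrt (f x * f y / (x * y)) * \<bar>x - y\<bar>"
    using key[of "f x" "f y" x y] by (auto simp: min.commute max.commute)
qed auto

theorem corollary1:
  fixes \<Theta> :: "'i set" and f :: "'i \<Rightarrow> real \<Rightarrow> real"
  assumes ne: "\<Theta> \<noteq> {}"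
    and st: "\<And>\<theta>. \<theta> \<in> \<Theta> \<Longrightarrow> stable (f \<theta>)"
    and bdd: "\<And>x. x > 0 \<Longrightarrow> bdd_above ((\<lambda>\<theta>. f \<theta> x) ` \<Theta>)"
    and infpos: "\<And>x. x > 0 \<Longrightarrow> (INF \<theta>\<in>\<Theta>. f \<theta> x) > 0"
  shows "stable (\<lambda>x. SUP \<theta>\<in>\<Theta>. f \<theta> x) \<and> stable (\<lambda>x. INF \<theta>\<in>\<Theta>. f \<theta> x)"
proof -
  have pos: "\<And>\<theta> x. \<theta> \<in> \<Theta> \<Longrightarrow> x > 0 \<Longrightarrow> f \<theta> x > 0" using st stable_iff by blast
  have ineq: "\<And>\<theta> x y. \<theta> \<in> \<Theta> \<Longrightarrow> x > 0 \<Longrightarrow> y > 0 \<Longrightarrow> f \<theta> x * min x y \<le> f \<theta> y * max x y"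
    using st stable_iff by blast
  have bb: "\<And>x. x > 0 \<Longrightarrow> bdd_below ((\<lambda>\<theta>. f \<theta> x) ` \<Theta>)"
    using pos by (meson bdd_below.I2 less_imp_le)
  have s1: "stable (\<lambda>x. SUP \<theta>\<in>\<Theta>. f \<theta> x)"
    unfolding stable_iff
  proof (intro conjI allI impI)
    fix x :: real assume "x > 0"
    obtain t where "t \<in> \<Theta>" using ne by blast
    have "f t x \<le> (SUP \<theta>\<in>\<Theta>. f \<theta> x)" using cSUP_upper[OF \<open>t \<in> \<Theta>\<close> bdd[OF \<open>x>0\<close>]] .
    thus "(SUP \<theta>\<in>\<Theta>. f \<theta> x) > 0" using pos[OF \<open>t \<in> \<Theta>\<close> \<open>x>0\<close>] by linarith
  next
    fix x y :: real assume x: "x > 0" and y: "y > 0"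
    have m: "min x y > 0" using x y by simp
    have "(SUP \<theta>\<in>\<Theta>. f \<theta> x) \<le> (SUP \<theta>\<in>\<Theta>. f \<theta> y) * max x y / min x y"
    proof (rule cSUP_least[OF ne])
      fix \<theta> assume th: "\<theta> \<in> \<Theta>"
      have "f \<theta> x * min x y \<le> f \<theta> y * max x y" using ineq[OF th x y] .
      also have "\<dots> \<le> (SUP \<theta>\<in>\<Theta>. f \<theta> y) * max x y"
        using cSUP_upper[OF th bdd[OF y]] x y by (intro mult_right_mono) auto
      finally show "f \<theta> x \<le> (SUP \<theta>\<in>\<Theta>. f \<theta> y) * max x y / min x y"
        using m by (simp add: pos_le_divide_eq)
    qed
    thus "(SUP \<theta>\<in>\<Theta>. f \<theta> x) * min x y \<le> (SUP \<theta>\<in>\<Theta>. f \<theta> y) * max x y"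
      using m by (simp add: pos_le_divide_eq)
  qed
  have s2: "stable (\<lambda>x. INF \<theta>\<in>\<Theta>. f \<theta> x)"
    unfolding stable_iff
  proof (intro conjI allI impI)
    fix x :: real assume "x > 0"
    thus "(INF \<theta>\<in>\<Theta>. f \<theta> x) > 0" using infpos by blast
  next
    fix x y :: real assume x: "x > 0" and y: "y > 0"
    have M: "max x y > 0" using x y by simp
    have "(INF \<theta>\<in>\<Theta>. f \<theta> x) * min x y / max x y \<le> (INF \<theta>\<in>\<Theta>. f \<theta> y)"
    proof (rule cINF_greatest[OF ne])
      fix \<theta> assume th: "\<theta> \<in> \<Theta>"
      have "(INF \<theta>\<in>\<Theta>. f \<theta> x) * min x y \<le> f \<theta> x * min x y"
        using cINF_lower[OF bb[OF x] th] x y by (intro mult_right_mono) auto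
      also have "\<dots> \<le> f \<theta> y * max x y" using ineq[OF th x y] .
      finally show "(INF \<theta>\<in>\<Theta>. f \<theta> x) * min x y / max x y \<le> f \<theta> y"
        using M by (simp add: pos_divide_le_eq)
    qed
    thus "(INF \<theta>\<in>\<Theta>. f \<theta> x) * min x y \<le> (INF \<theta>\<in>\<Theta>. f \<theta> y) * max x y"
      using M by (simp add: pos_divide_le_eq)
  qed
  show ?thesis using s1 s2 by blast
qed

end
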